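(* Let $G$ be a periodic group and let $x\in G$ be such that $[G,x]$ is a Chernikov group. Let $R$ be the radicable part of $[G,x]$ and assume that $[R,x]=\{1\}$. Then $R=\{1\}$.
   Context: For a subgroup $H$ and element $x$ of a group $G$, $[H,x]$ is the subgroup generated by all commutators $[a,x]=a^{-1}x^{-1}ax$ with $a\in H$. A group is radicable if every equation $y^s=a$ ($s$ a positive integer) has a solution in it. A Chernikov group $K$ has a radicable abelian normal subgroup $R$ (its radicable part, or finite residual) which is a direct product of finitely many Prüfer groups $C_{p^\infty}$ and with $K/R$ finite. *)

theory Defs
  imports "HOL-Algebra.Algebra"
begin

definition commutator :: "('a, 'b) monoid_scheme \<Rightarrow> 'a \<Rightarrow> 'a \<Rightarrow> 'a" where
  "commutator G a x = inv\<^bsub>G\<^esub> a \<otimes>\<^bsub>G\<^esub> inv\<^bsub>G\<^esub> x \<otimes>\<^bsub>G\<^esub> a \<otimes>\<^bsub>G\<^esub> x"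

definition comm_subgroup :: "('a, 'b) monoid_scheme \<Rightarrow> 'a set \<Rightarrow> 'a \<Rightarrow> 'a set" where
  "comm_subgroup G H x = generate G {commutator G a x | a. a \<in> H}"

definition periodic_group :: "('a, 'b) monoid_scheme \<Rightarrow> bool" where
  "periodic_group G \<longleftrightarrow> group G \<and> (\<forall>g \<in> carrier G. \<exists>n::nat. n > 0 \<and> g [^]\<^bsub>G\<^esub> n = \<one>\<^bsub>G\<^esub>)"

definition radicable :: "('a, 'b) monoid_scheme \<Rightarrow> 'a set \<Rightarrow> bool" where
  "radicable G R \<longleftrightarrow> (\<forall>a \<in> R. \<forall>s::nat. s > 0 \<longrightarrow> (\<exists>y \<in> R. y [^]\<^bsub>G\<^esub> s = a))"

text \<open>The Pruefer p-group C_{p^\<infinity>}, modelled as the rationals in [0,1) with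
  p-power denominators under addition modulo 1.\<close>
definition prufer_group :: "nat \<Rightarrow> rat monoid" where
  "prufer_group p = \<lparr> carrier = {q. \<exists>(k::int) (n::nat). q = of_int k / of_nat (p ^ n) \<and> 0 \<le> q \<and> q < 1},
                      monoid.mult = (\<lambda>a b. frac (a + b)),
                      one = 0 \<rparr>"

definition radicable_part_of :: "('a, 'b) monoid_scheme \<Rightarrow> 'a set \<Rightarrow> 'a set \<Rightarrow> bool" where
  "radicable_part_of G K R \<longleftrightarrow>
     subgroup K G \<and> R \<lhd> (G\<lparr>carrier := K\<rparr>) \<and>
     comm_group (G\<lparr>carrier := R\<rparr>) \<and> radicable G R \<and>
     (\<exists>(n::nat) (p::nat \<Rightarrow> nat). (\<forall>i < n. Factorial_Ring.prime (p i)) \<and>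
        G\<lparr>carrier := R\<rparr> \<cong> product_group {..<n} (\<lambda>i. prufer_group (p i))) \<and>
     finite (rcosets\<^bsub>G\<lparr>carrier := K\<rparr>\<^esub> R)"

definition chernikov :: "('a, 'b) monoid_scheme \<Rightarrow> 'a set \<Rightarrow> bool" where
  "chernikov G K \<longleftrightarrow> (\<exists>R. radicable_part_of G K R)"

end

theory Submission
  imports Defs
begin

lemma (in group) inv_cancel_l [simp]:
  "x \<in> carrier G \<Longrightarrow> y \<in> carrier G \<Longrightarrow> inv x \<otimes> (x \<otimes> y) = y"
  by (simp add: m_assoc[symmetric])
lemma (in group) inv_cancel_r [simp]:
  "x \<in> carrier G \<Longrightarrow> y \<in> carrier G \<Longrightarrow> x \<otimes> (inv x \<otimes> y) = y"
  by (simp add: m_assoc[symmetric])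

lemma (in group) comm_conj:
  assumes "a \<in> carrier G" "g \<in> carrier G" "x \<in> carrier G"
  shows "g \<otimes> commutator G a x \<otimes> inv g =
         commutator G (a \<otimes> inv g) x \<otimes> inv (commutator G (inv g) x)"
  using assms by (simp add: commutator_def m_assoc inv_mult_group)

lemma (in group) conj_pow:
  assumes "a \<in> carrier G" "g \<in> carrier G"
  shows "(g \<otimes> a \<otimes> inv g) [^] (n::nat) = g \<otimes> a [^] n \<otimes> inv g"
  using assms by (induction n) (simp_all add: m_assoc)


lemma (in group) comm_gens_sub:
  "x \<in> carrier G \<Longrightarrow> {commutator G a x | a. a \<in> carrier G} \<subseteq> carrier G"
  by (auto simp: commutator_def)

lemma (in group) comm_subgroup_conj:
  assumes x: "x \<in> carrier G" and g: "g \<in> carrier G"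
    and k: "k \<in> comm_subgroup G (carrier G) x"
  shows "g \<otimes> k \<otimes> inv g \<in> comm_subgroup G (carrier G) x"
proof -
  let ?S = "{commutator G a x | a. a \<in> carrier G}"
  have Ssub: "?S \<subseteq> carrier G" using x by (rule comm_gens_sub)
  have cc: "commutator G a x \<in> carrier G" if "a \<in> carrier G" for a
    using that x by (simp add: commutator_def)
  have "k \<in> generate G ?S" using k by (simp add: comm_subgroup_def)
  then show ?thesis unfolding comm_subgroup_def
  proof (induction k rule: generate.induct)
    case one
    then show ?case using g by (simp add: generate.one)
  next
    case (incl h)
    then obtain a where a: "a \<in> carrier G" "h = commutator G a x" by auto
    have "commutator G (a \<otimes> inv g) x \<in> generate G ?S"
      using a g by (intro generate.incl) auto
    moreover have "inv (commutator G (inv g) x) \<in> generate G ?S"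
      using g by (intro generate.inv) auto
    ultimately show ?case using comm_conj[OF a(1) g x] a(2) by (simp add: generate.eng)
  next
    case (inv h)
    then obtain a where a: "a \<in> carrier G" "h = commutator G a x" by auto
    have e: "g \<otimes> inv h \<otimes> inv g = inv (g \<otimes> h \<otimes> inv g)"
      using a g cc by (simp add: inv_mult_group m_assoc)
    have "g \<otimes> h \<otimes> inv g \<in> generate G ?S"
    proof -
      have "commutator G (a \<otimes> inv g) x \<in> generate G ?S"
        using a g by (intro generate.incl) auto
      moreover have "inv (commutator G (inv g) x) \<in> generate G ?S"
        using g by (intro generate.inv) auto
      ultimately show ?thesis using comm_conj[OF a(1) g x] a(2) by (simp add: generate.eng)
    qed
    then show ?case unfolding e using generate_m_inv_closed[OF Ssub] by blast
  next
    case (eng h1 h2)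
    have h: "h1 \<in> carrier G" "h2 \<in> carrier G"
      using eng.hyps generate_in_carrier[OF Ssub] by auto
    have "g \<otimes> (h1 \<otimes> h2) \<otimes> inv g = (g \<otimes> h1 \<otimes> inv g) \<otimes> (g \<otimes> h2 \<otimes> inv g)"
      using h g by (simp add: m_assoc)
    then show ?case using eng.IH by (simp add: generate.eng)
  qed
qed


lemma (in group) fin_index_pow:
  assumes K: "subgroup K G" and N: "R \<lhd> G\<lparr>carrier := K\<rparr>"
    and fin: "finite (rcosets\<^bsub>G\<lparr>carrier := K\<rparr>\<^esub> R)" and k: "k \<in> K"
  shows "k [^] card (rcosets\<^bsub>G\<lparr>carrier := K\<rparr>\<^esub> R) \<in> R"
proof -
  let ?H = "G\<lparr>carrier := K\<rparr>"
  let ?m = "card (rcosets\<^bsub>?H\<^esub> R)"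
  interpret N: normal R ?H by fact
  have grp: "group (?H Mod R)" by (rule N.factorgroup_is_group)
  have kc: "k \<in> carrier ?H" using k by simp
  have mem: "R #>\<^bsub>?H\<^esub> k \<in> carrier (?H Mod R)"
    using N.rcosetsI[OF N.subset kc] by (simp add: FactGroup_def)
  have ord: "order (?H Mod R) = ?m" by (simp add: order_def FactGroup_def)
  have "(R #>\<^bsub>?H\<^esub> k) [^]\<^bsub>?H Mod R\<^esub> ?m = \<one>\<^bsub>?H Mod R\<^esub>"
    using group.pow_order_eq_1[OF grp mem] ord by simp
  then have "R #>\<^bsub>?H\<^esub> (k [^]\<^bsub>?H\<^esub> ?m) = R"
    using N.FactGroup_pow[OF kc, of ?m] by (simp add: FactGroup_def)
  then have "k [^]\<^bsub>?H\<^esub> ?m \<in> R"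
    using N.coset_join1 N.subgroup_axioms kc N.nat_pow_closed by blast
  then show ?thesis by (metis nat_pow_consistent)
qed


lemma (in group) rad_part_conj:
  assumes x: "x \<in> carrier G"
    and rp: "radicable_part_of G (comm_subgroup G (carrier G) x) R"
    and g: "g \<in> carrier G" and r: "r \<in> R"
  shows "g \<otimes> r \<otimes> inv g \<in> R"
proof -
  let ?K = "comm_subgroup G (carrier G) x"
  let ?H = "G\<lparr>carrier := ?K\<rparr>"
  let ?m = "card (rcosets\<^bsub>?H\<^esub> R)"
  have K: "subgroup ?K G" and N: "R \<lhd> ?H" and rad: "radicable G R"
    and fin: "finite (rcosets\<^bsub>?H\<^esub> R)"
    using rp by (auto simp: radicable_part_of_def)
  interpret N: normal R ?H by fact
  have RK: "R \<subseteq> ?K" using N.subset by simp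
  have KG: "?K \<subseteq> carrier G" using K subgroup.subset by blast
  have "R #>\<^bsub>?H\<^esub> \<one>\<^bsub>?H\<^esub> \<in> rcosets\<^bsub>?H\<^esub> R"
    using N.rcosetsI[OF N.subset N.one_closed] .
  then have m: "?m > 0" using fin card_gt_0_iff by blast
  obtain y where y: "y \<in> R" "y [^] ?m = r"
    using rad r m unfolding radicable_def by blast
  have yc: "y \<in> carrier G" using y RK KG by blast
  have "g \<otimes> r \<otimes> inv g = (g \<otimes> y \<otimes> inv g) [^] ?m"
    using conj_pow[OF yc g] y by simp
  moreover have "g \<otimes> y \<otimes> inv g \<in> ?K"
    using comm_subgroup_conj[OF x g] y RK by blast
  ultimately show ?thesis using fin_index_pow[OF K N fin] by simp
qed


lemma (in group) transfer_exists:
  assumes L: "subgroup L G" and R: "subgroup R G" and RL: "R \<subseteq> L"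
    and ab: "comm_group (G\<lparr>carrier := R\<rparr>)"
    and cen: "\<And>l r. l \<in> L \<Longrightarrow> r \<in> R \<Longrightarrow> l \<otimes> r = r \<otimes> l"
    and fin: "finite {R #> l | l. l \<in> L}"
  shows "\<exists>V. (\<forall>l\<in>L. V l \<in> R) \<and> (\<forall>a\<in>L. \<forall>b\<in>L. V (a \<otimes> b) = V a \<otimes> V b)
             \<and> (\<forall>r\<in>R. V r = r [^] card {R #> l | l. l \<in> L})"
proof -
  define C where "C = {R #> l | l. l \<in> L}"
  define rep where "rep c = (SOME l. l \<in> L \<and> c = R #> l)" for c
  let ?H = "G\<lparr>carrier := R\<rparr>"
  interpret H: comm_group ?H by fact
  have LG: "L \<subseteq> carrier G" using L subgroup.subset by blast
  have RG: "R \<subseteq> carrier G" using R subgroup.subset by blast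
  have rep: "rep c \<in> L \<and> R #> rep c = c" if "c \<in> C" for c
  proof -
    have "\<exists>l. l \<in> L \<and> c = R #> l" using that by (auto simp: C_def)
    then have "rep c \<in> L \<and> c = R #> rep c" unfolding rep_def by (rule someI_ex)
    then show ?thesis by simp
  qed
  have Cmul: "c #> l \<in> C" if cl: "c \<in> C" "l \<in> L" for c l
  proof -
    obtain l0 where "l0 \<in> L" "c = R #> l0" using cl(1) by (auto simp: C_def)
    then have "c #> l = R #> (l0 \<otimes> l)" using coset_mult_assoc RG LG cl(2) by blast
    moreover have "l0 \<otimes> l \<in> L" using subgroup.m_closed[OF L \<open>l0 \<in> L\<close> cl(2)] .
    ultimately show ?thesis unfolding C_def by blast
  qed
  have Csub: "c \<subseteq> carrier G" if "c \<in> C" for c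
  proof -
    have "rep c \<in> carrier G" using rep[OF that] LG by auto
    then have "R #> rep c \<subseteq> carrier G" using r_coset_subset_G[OF RG] by blast
    then show ?thesis using rep[OF that] by simp
  qed
  define f where "f l c = rep c \<otimes> l \<otimes> inv (rep (c #> l))" for l c
  have key: "f l c \<in> R" if "c \<in> C" "l \<in> L" for c l
  proof -
    have r1: "rep c \<in> carrier G" and lc: "l \<in> carrier G" using rep[OF that(1)] that(2) LG by auto
    have a: "rep c \<otimes> l \<in> carrier G" using r1 lc by simp
    have b: "rep (c #> l) \<in> carrier G" using rep[OF Cmul[OF that]] LG by auto
    have "R #> (rep c \<otimes> l) = (R #> rep c) #> l" using coset_mult_assoc[OF RG r1 lc] by simp
    also have "\<dots> = c #> l" using rep[OF that(1)] by simp
    also have "\<dots> = R #> rep (c #> l)" using rep[OF Cmul[OF that]] by auto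
    finally have "R #> (rep c \<otimes> l \<otimes> inv (rep (c #> l))) = R"
      using coset_mult_inv2[OF _ a _ RG] b by blast
    then show ?thesis unfolding f_def using coset_join1[OF _ _ R] a b by blast
  qed
  define V where "V l = finprod ?H (f l) C" for l
  have fPi: "f l \<in> C \<rightarrow> carrier ?H" if "l \<in> L" for l using key that by auto
  have Vin: "\<forall>l\<in>L. V l \<in> R"
  proof
    fix l assume "l \<in> L"
    from H.finprod_closed[OF fPi[OF this]] show "V l \<in> R" unfolding V_def by simp
  qed
  have hom: "V (a \<otimes> b) = V a \<otimes> V b" if a: "a \<in> L" and b: "b \<in> L" for a b
  proof -
    have ac: "a \<in> carrier G" and bc: "b \<in> carrier G" using a b LG by auto
    have img: "(\<lambda>c. c #> a) ` C = C"
    proof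
      show "(\<lambda>c. c #> a) ` C \<subseteq> C" using Cmul a by auto
      show "C \<subseteq> (\<lambda>c. c #> a) ` C"
      proof
        fix c assume c: "c \<in> C"
        have ia: "inv a \<in> L" using subgroup.m_inv_closed[OF L a] .
        have "c \<subseteq> carrier G" using Csub[OF c] .
        then have "c = (c #> inv a) #> a" using coset_mult_assoc ac by simp
        then show "c \<in> (\<lambda>c. c #> a) ` C" using Cmul[OF c ia] by blast
      qed
    qed
    have inj: "inj_on (\<lambda>c. c #> a) C"
    proof
      fix c1 c2 assume c: "c1 \<in> C" "c2 \<in> C" "c1 #> a = c2 #> a"
      have s: "c1 \<subseteq> carrier G" "c2 \<subseteq> carrier G"
        using Csub c by auto
      have "c1 = (c1 #> a) #> inv a" using coset_mult_assoc ac s by simp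
      also have "\<dots> = (c2 #> a) #> inv a" using c(3) by simp
      also have "\<dots> = c2" using coset_mult_assoc ac s by simp
      finally show "c1 = c2" .
    qed
    have split: "f (a \<otimes> b) c = f a c \<otimes> f b (c #> a)" if c: "c \<in> C" for c
    proof -
      have s: "c \<subseteq> carrier G" using Csub[OF c] .
      have e: "c #> (a \<otimes> b) = (c #> a) #> b" using coset_mult_assoc ac bc s by simp
      have r1: "rep c \<in> carrier G" and r2: "rep (c #> a) \<in> carrier G"
        and r3: "rep ((c #> a) #> b) \<in> carrier G"
        using rep[OF c] rep[OF Cmul[OF c a]] rep[OF Cmul[OF Cmul[OF c a] b]] LG by auto
      show ?thesis unfolding f_def e using r1 r2 r3 ac bc by (simp add: m_assoc)
    qed
    have "V (a \<otimes> b) = finprod ?H (\<lambda>c. f a c \<otimes>\<^bsub>?H\<^esub> f b (c #> a)) C"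
      unfolding V_def
    proof (rule H.finprod_cong')
      show "(\<lambda>c. f a c \<otimes>\<^bsub>?H\<^esub> f b (c #> a)) \<in> C \<rightarrow> carrier ?H"
      proof
        fix c assume c: "c \<in> C"
        show "f a c \<otimes>\<^bsub>?H\<^esub> f b (c #> a) \<in> carrier ?H"
          using subgroup.m_closed[OF R key[OF c a] key[OF Cmul[OF c a] b]] by simp
      qed
    qed (use split in simp_all)
    also have "\<dots> = V a \<otimes>\<^bsub>?H\<^esub> finprod ?H (\<lambda>c. f b (c #> a)) C"
      unfolding V_def
      apply (rule H.finprod_multf)
      using key Cmul a b by auto
    also have "finprod ?H (\<lambda>c. f b (c #> a)) C = V b"
    proof -
      have "V b = finprod ?H (f b) ((\<lambda>c. c #> a) ` C)" unfolding V_def img ..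
      also have "\<dots> = finprod ?H (\<lambda>c. f b (c #> a)) C"
        apply (rule H.finprod_reindex)
        using key b img inj by auto
      finally show ?thesis by simp
    qed
    finally show ?thesis by simp
  qed
  have pw: "V r = r [^] card C" if r: "r \<in> R" for r
  proof -
    have rc: "r \<in> carrier G" using r RG by auto
    have fr: "f r c = r" if c: "c \<in> C" for c
    proof -
      have rl: "rep c \<in> L" and ce: "R #> rep c = c" using rep[OF c] by auto
      have r1: "rep c \<in> carrier G" using rl LG by auto
      have "c #> r = R #> (rep c \<otimes> r)" using ce coset_mult_assoc[OF RG r1 rc] by simp
      also have "\<dots> = R #> (r \<otimes> rep c)" using cen[OF rl r] by simp
      also have "\<dots> = (R #> r) #> rep c" using coset_mult_assoc[OF RG rc r1] by simp
      also have "\<dots> = c" using ce subgroup.rcos_const[OF R is_group r] by simp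
      finally have "c #> r = c" .
      then show ?thesis unfolding f_def using cen[OF rl r] r1 rc by (simp add: m_assoc)
    qed
    have "V r = finprod ?H (\<lambda>c. r) C"
      unfolding V_def apply (rule H.finprod_cong') using fr r by auto
    also have "\<dots> = r [^]\<^bsub>?H\<^esub> card C" using H.finprod_const r by simp
    finally show ?thesis by (metis nat_pow_consistent)
  qed
  show ?thesis
    apply (rule exI[of _ V])
    using Vin hom pw unfolding C_def by auto
qed


lemma (in group) comm_inv_elem:
  assumes "h \<in> carrier G" "r \<in> carrier G" "h \<otimes> r = r \<otimes> h"
  shows "inv h \<otimes> r = r \<otimes> inv h"
proof -
  have "inv h \<otimes> r = inv h \<otimes> (r \<otimes> h) \<otimes> inv h" using assms by (simp add: m_assoc)
  also have "\<dots> = inv h \<otimes> (h \<otimes> r) \<otimes> inv h" using assms by simp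
  also have "\<dots> = r \<otimes> inv h" using assms(1,2) by (simp add: m_assoc)
  finally show ?thesis .
qed

theorem lemma2p6:
  fixes G (structure) and x and R
  assumes "periodic_group G"
    and "x \<in> carrier G"
    and "chernikov G (comm_subgroup G (carrier G) x)"
    and "radicable_part_of G (comm_subgroup G (carrier G) x) R"
    and "comm_subgroup G R x = {\<one>}"
  shows "R = {\<one>}"
proof -
  interpret group G using assms(1) by (simp add: periodic_group_def)
  have xc: "x \<in> carrier G" by fact
  define K where "K = comm_subgroup G (carrier G) x"
  let ?H = "G\<lparr>carrier := K\<rparr>"
  have rp: "radicable_part_of G K R" using assms(4) by (simp add: K_def)
  have K: "subgroup K G" and N: "R \<lhd> ?H" and ab: "comm_group (G\<lparr>carrier := R\<rparr>)"
    and rad: "radicable G R" and fin: "finite (rcosets\<^bsub>?H\<^esub> R)"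
    using rp by (auto simp: radicable_part_of_def)
  interpret N: normal R ?H by fact
  have RK: "R \<subseteq> K" using N.subset by simp
  have KG: "K \<subseteq> carrier G" using K subgroup.subset by blast
  have RG: "R \<subseteq> carrier G" using RK KG by blast
  have Rsub: "subgroup R G" using incl_subgroup[OF K N.subgroup_axioms] .
  have Rnorm: "g \<otimes> r \<otimes> inv g \<in> R" if "g \<in> carrier G" "r \<in> R" for g r
    using rad_part_conj[OF xc assms(4) that] .
  have Kconj: "g \<otimes> k \<otimes> inv g \<in> K" if "g \<in> carrier G" "k \<in> K" for g k
    using comm_subgroup_conj[OF xc that(1)] that(2) by (simp add: K_def)
  have xR: "x \<otimes> r = r \<otimes> x" if r: "r \<in> R" for r
  proof -
    have rc: "r \<in> carrier G" using r RG by auto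
    have "commutator G r x \<in> comm_subgroup G R x"
      unfolding comm_subgroup_def using r by (intro generate.incl) auto
    then have e: "inv r \<otimes> inv x \<otimes> r \<otimes> x = \<one>"
      using assms(5) by (simp add: commutator_def)
    have "x \<otimes> r = (x \<otimes> r) \<otimes> (inv r \<otimes> inv x \<otimes> r \<otimes> x)" using e rc xc by simp
    also have "\<dots> = r \<otimes> x" using rc xc by (simp add: m_assoc)
    finally show ?thesis .
  qed
  obtain n :: nat where n: "n > 0" "x [^] n = \<one>"
    using assms(1) xc unfolding periodic_group_def by blast
  define Ls where "Ls = {inv g \<otimes> x \<otimes> g | g. g \<in> carrier G}"
  define L where "L = generate G Ls"
  have LsG: "Ls \<subseteq> carrier G" using xc by (auto simp: Ls_def)
  have L: "subgroup L G" unfolding L_def using generate_is_subgroup[OF LsG] .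
  have LG: "L \<subseteq> carrier G" using L subgroup.subset by blast
  have xL: "x \<in> L"
  proof -
    have "inv \<one> \<otimes> x \<otimes> \<one> \<in> Ls" unfolding Ls_def by blast
    then show ?thesis using xc unfolding L_def by (simp add: generate.incl)
  qed
  have KL: "K \<subseteq> L"
    unfolding K_def comm_subgroup_def
  proof (rule generate_subgroup_incl[OF _ L])
    show "{commutator G a x |a. a \<in> carrier G} \<subseteq> L"
    proof
      fix h assume "h \<in> {commutator G a x |a. a \<in> carrier G}"
      then obtain a where a: "a \<in> carrier G" "h = commutator G a x" by auto
      have e: "h = inv (inv a \<otimes> x \<otimes> a) \<otimes> x"
        using a xc by (simp add: commutator_def inv_mult_group m_assoc)
      have "inv (inv a \<otimes> x \<otimes> a) \<in> L" unfolding L_def Ls_def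
        using a by (intro generate.inv) auto
      then show "h \<in> L" unfolding e using subgroup.m_closed[OF L _ xL] by blast
    qed
  qed
  have RL: "R \<subseteq> L" using RK KL by blast
  have cen: "l \<otimes> r = r \<otimes> l" if l: "l \<in> L" and r: "r \<in> R" for l r
  proof -
    have rc: "r \<in> carrier G" using r RG by auto
    have gen: "h \<otimes> r = r \<otimes> h" if h: "h \<in> Ls" for h
    proof -
      obtain g where g: "g \<in> carrier G" "h = inv g \<otimes> x \<otimes> g" using h by (auto simp: Ls_def)
      define r' where "r' = g \<otimes> r \<otimes> inv g"
      have r'R: "r' \<in> R" unfolding r'_def using Rnorm[OF g(1) r] .
      have r'c: "r' \<in> carrier G" using r'R RG by auto
      have e1: "g \<otimes> r = r' \<otimes> g" unfolding r'_def using g rc by (simp add: m_assoc)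
      have e2: "inv g \<otimes> r' = r \<otimes> inv g" unfolding r'_def using g rc by (simp add: m_assoc)
      have "h \<otimes> r = inv g \<otimes> x \<otimes> (g \<otimes> r)" using g rc xc by (simp add: m_assoc)
      also have "\<dots> = inv g \<otimes> (x \<otimes> r') \<otimes> g" unfolding e1 using g r'c xc by (simp add: m_assoc)
      also have "\<dots> = inv g \<otimes> (r' \<otimes> x) \<otimes> g" using xR[OF r'R] by simp
      also have "\<dots> = (inv g \<otimes> r') \<otimes> x \<otimes> g" using g r'c xc by (simp add: m_assoc)
      also have "\<dots> = r \<otimes> h" unfolding e2 using g rc xc by (simp add: m_assoc)
      finally show ?thesis .
    qed
    from l show ?thesis unfolding L_def
    proof (induction l rule: generate.induct)
      case one
      then show ?case using rc by simp
    next
      case (incl h)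
      then show ?case using gen by blast
    next
      case (inv h)
      then show ?case using gen[OF inv] comm_inv_elem LsG rc by blast
    next
      case (eng h1 h2)
      have h: "h1 \<in> carrier G" "h2 \<in> carrier G"
        using eng.hyps generate_in_carrier[OF LsG] by auto
      have "h1 \<otimes> h2 \<otimes> r = h1 \<otimes> (h2 \<otimes> r)" using h rc by (simp add: m_assoc)
      also have "\<dots> = (h1 \<otimes> r) \<otimes> h2" using eng.IH(2) h rc by (simp add: m_assoc)
      also have "\<dots> = r \<otimes> (h1 \<otimes> h2)" using eng.IH(1) h rc by (simp add: m_assoc)
      finally show ?case .
    qed
  qed

  define Q where "Q = {l. \<exists>k\<in>K. \<exists>i::nat. l = k \<otimes> x [^] i}"
  have Qmul: "a \<otimes> b \<in> Q" if ab: "a \<in> Q" "b \<in> Q" for a b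
  proof -
    obtain k i where k: "k \<in> K" "a = k \<otimes> x [^] (i::nat)" using ab(1) unfolding Q_def by blast
    obtain k' j where k': "k' \<in> K" "b = k' \<otimes> x [^] (j::nat)" using ab(2) unfolding Q_def by blast
    have kc: "k \<in> carrier G" "k' \<in> carrier G" using k k' KG by auto
    have xi: "x [^] i \<in> carrier G" "x [^] j \<in> carrier G" using xc by auto
    have k2: "x [^] i \<otimes> k' \<otimes> inv (x [^] i) \<in> K" using Kconj[OF xi(1) k'(1)] .
    have k3: "k \<otimes> (x [^] i \<otimes> k' \<otimes> inv (x [^] i)) \<in> K"
      using subgroup.m_closed[OF K k(1) k2] .
    have "a \<otimes> b = (k \<otimes> (x [^] i \<otimes> k' \<otimes> inv (x [^] i))) \<otimes> (x [^] i \<otimes> x [^] j)"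
      using k k' kc xi by (simp add: m_assoc)
    also have "\<dots> = (k \<otimes> (x [^] i \<otimes> k' \<otimes> inv (x [^] i))) \<otimes> x [^] (i + j)"
      using xc by (simp add: nat_pow_mult)
    finally show ?thesis using k3 unfolding Q_def by blast
  qed
  have Q1: "\<one> \<in> Q"
  proof -
    have "\<one> = \<one> \<otimes> x [^] (0::nat)" by simp
    then show ?thesis unfolding Q_def using subgroup.one_closed[OF K] by blast
  qed
  have Qpow: "y [^] (m::nat) \<in> Q" if "y \<in> Q" "y \<in> carrier G" for y m
  proof (induction m)
    case 0 then show ?case using Q1 by simp
  next
    case (Suc m) then show ?case using Qmul that by simp
  qed
  have LsQ: "y \<in> Q \<and> inv y \<in> Q" if y: "y \<in> Ls" for y
  proof -
    obtain g where g: "g \<in> carrier G" "y = inv g \<otimes> x \<otimes> g" using y by (auto simp: Ls_def)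
    have yc: "y \<in> carrier G" using y LsG by auto
    have cK: "commutator G g x \<in> K" unfolding K_def comm_subgroup_def
      using g by (intro generate.incl) auto
    have icK: "inv (commutator G g x) \<in> K" using subgroup.m_inv_closed[OF K cK] .
    have kK: "x \<otimes> inv (commutator G g x) \<otimes> inv x \<in> K" using Kconj[OF xc icK] .
    have "y = (x \<otimes> inv (commutator G g x) \<otimes> inv x) \<otimes> x [^] (1::nat)"
      using g xc by (simp add: commutator_def inv_mult_group m_assoc)
    then have yQ: "y \<in> Q" using kK unfolding Q_def by blast
    have "y [^] n = inv g \<otimes> x [^] n \<otimes> inv (inv g)"
      using conj_pow[OF xc, of "inv g" n] g by simp
    then have yn: "y [^] n = \<one>" using n g by simp
    have "y [^] (n - 1) \<otimes> y = y [^] n" using n(1) yc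
      by (metis Suc_diff_1 nat_pow_Suc)
    then have "inv y = y [^] (n - 1)" using yn yc by (intro inv_equality) auto
    then show ?thesis using yQ Qpow[OF yQ yc] by simp
  qed
  have LQ: "L \<subseteq> Q"
  proof
    fix l assume "l \<in> L"
    then show "l \<in> Q" unfolding L_def
    proof (induction l rule: generate.induct)
      case one then show ?case using Q1 by simp
    next
      case (incl h) then show ?case using LsQ by blast
    next
      case (inv h) then show ?case using LsQ by blast
    next
      case (eng h1 h2) then show ?case using Qmul by blast
    qed
  qed
  define Cs where "Cs = {R #> l | l. l \<in> L}"
  have Cfin: "finite Cs"
  proof -
    have "Cs \<subseteq> (\<lambda>(c, i). c #> x [^] i) ` (Sigma (rcosets\<^bsub>?H\<^esub> R) (\<lambda>_. {..<n}))"
    proof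
      fix c assume "c \<in> Cs"
      then obtain l where l: "l \<in> L" "c = R #> l" by (auto simp: Cs_def)
      then obtain k i where k: "k \<in> K" "l = k \<otimes> x [^] (i::nat)" using LQ by (auto simp: Q_def)
      have kc: "k \<in> carrier G" using k KG by auto
      have "x [^] i = (x [^] n) [^] (i div n) \<otimes> x [^] (i mod n)"
        using xc by (simp add: nat_pow_pow nat_pow_mult)
      then have xi: "x [^] i = x [^] (i mod n)" using n xc by simp
      have "c = (R #> k) #> x [^] (i mod n)"
        using l k xi coset_mult_assoc[OF RG kc, of "x [^] (i mod n)"] xc by simp
      moreover have "R #> k \<in> rcosets\<^bsub>?H\<^esub> R"
        using N.rcosetsI[OF N.subset, of k] k by simp
      moreover have "i mod n \<in> {..<n}" using n by simp
      ultimately show "c \<in> (\<lambda>(c, i). c #> x [^] i) ` (Sigma (rcosets\<^bsub>?H\<^esub> R) (\<lambda>_. {..<n}))"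
        by force
    qed
    then show ?thesis using fin by (meson finite_SigmaI finite_imageI finite_lessThan finite_subset)
  qed
  obtain V where Vin: "\<forall>l\<in>L. V l \<in> R" and Vhom: "\<forall>a\<in>L. \<forall>b\<in>L. V (a \<otimes> b) = V a \<otimes> V b"
    and Vpw: "\<forall>r\<in>R. V r = r [^] card Cs"
    using transfer_exists[OF L Rsub RL ab cen] Cfin unfolding Cs_def by blast
  have Vc: "V l \<in> carrier G" if "l \<in> L" for l using Vin that RG by auto
  have V1: "V \<one> = \<one>"
  proof -
    have o: "\<one> \<in> L" using subgroup.one_closed[OF L] .
    have "V (\<one> \<otimes> \<one>) = V \<one> \<otimes> V \<one>" using Vhom o by blast
    then have "V \<one> \<otimes> V \<one> = V \<one> \<otimes> \<one>" using Vc[OF o] by simp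
    then show ?thesis using Vc[OF o] by (simp only: l_cancel one_closed)
  qed
  have Vinv: "V (inv l) = inv (V l)" if l: "l \<in> L" for l
  proof -
    have il: "inv l \<in> L" using subgroup.m_inv_closed[OF L l] .
    have "V (inv l) \<otimes> V l = V (inv l \<otimes> l)" using Vhom il l by simp
    also have "\<dots> = \<one>" using l LG V1 by auto
    finally show ?thesis using Vc[OF l] Vc[OF il] by (intro inv_equality[symmetric])
  qed
  have Vpow: "V (l [^] (m::nat)) = V l [^] m" if l: "l \<in> L" for l m
  proof (induction m)
    case 0 then show ?case using V1 by simp
  next
    case (Suc m)
    have "l [^] k \<in> L" for k :: nat
      by (induction k) (simp_all add: subgroup.one_closed[OF L] subgroup.m_closed[OF L _ l])
    then have "l [^] m \<in> L" .
    then show ?case using Suc Vhom l by simp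
  qed
  have Rcomm: "a \<otimes> b = b \<otimes> a" if "a \<in> R" "b \<in> R" for a b
    using cen[of a b] that RL by blast
  have VxL: "V x [^] n = \<one>" using Vpow[OF xL, of n] n V1 by simp
  have Vgen: "V h [^] n = \<one>" if h: "h \<in> {commutator G a x | a. a \<in> carrier G}" for h
  proof -
    obtain a where a: "a \<in> carrier G" "h = commutator G a x" using h by auto
    define y where "y = inv a \<otimes> x \<otimes> a"
    have yL: "y \<in> L" unfolding L_def Ls_def y_def using a by (intro generate.incl) auto
    have iyL: "inv y \<in> L" using subgroup.m_inv_closed[OF L yL] .
    have e: "h = inv y \<otimes> x"
      using a xc unfolding y_def by (simp add: commutator_def inv_mult_group m_assoc)
    have "y [^] n = inv a \<otimes> x [^] n \<otimes> inv (inv a)"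
      using conj_pow[OF xc, of "inv a" n] a unfolding y_def by simp
    then have yn: "y [^] n = \<one>" using n a by simp
    have Vyn: "V y [^] n = \<one>" using Vpow[OF yL, of n] yn V1 by simp
    have VR: "V (inv y) \<in> R" "V x \<in> R" using Vin iyL xL by auto
    have "V h = V (inv y) \<otimes> V x" using e Vhom iyL xL by simp
    then have "V h [^] n = V (inv y) [^] n \<otimes> V x [^] n"
      using pow_mult_distrib[OF Rcomm[OF VR] ] VR RG by auto
    also have "\<dots> = \<one>" using Vinv[OF yL] Vyn VxL Vc[OF yL] by (simp add: nat_pow_inv)
    finally show ?thesis .
  qed
  have VK: "V k [^] n = \<one>" if k: "k \<in> K" for k
  proof -
    have "k \<in> generate G {commutator G a x | a. a \<in> carrier G}"
      using k by (simp add: K_def comm_subgroup_def)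
    then show ?thesis
    proof (induction k rule: generate.induct)
      case one then show ?case using V1 by simp
    next
      case (incl h) then show ?case using Vgen by blast
    next
      case (inv h)
      have hK: "h \<in> K" unfolding K_def comm_subgroup_def using inv by (intro generate.incl)
      have hL: "h \<in> L" using hK KL by auto
      have "V (inv h) [^] n = inv (V h [^] n)" using Vinv[OF hL] Vc[OF hL] by (simp add: nat_pow_inv)
      then show ?case using Vgen[OF inv] by simp
    next
      case (eng h1 h2)
      have hK: "h1 \<in> K" "h2 \<in> K" using eng.hyps unfolding K_def comm_subgroup_def by auto
      have hL: "h1 \<in> L" "h2 \<in> L" using hK KL by auto
      have VR: "V h1 \<in> R" "V h2 \<in> R" using Vin hL by auto
      have "V (h1 \<otimes> h2) [^] n = (V h1 \<otimes> V h2) [^] n" using Vhom hL by simp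
      also have "\<dots> = V h1 [^] n \<otimes> V h2 [^] n"
        using pow_mult_distrib[OF Rcomm[OF VR]] VR RG by auto
      also have "\<dots> = \<one>" using eng.IH by simp
      finally show ?case .
    qed
  qed
  have Cne: "card Cs > 0"
  proof -
    have "R #> \<one> \<in> Cs" unfolding Cs_def using subgroup.one_closed[OF L] by blast
    then show ?thesis using Cfin card_gt_0_iff by blast
  qed
  show ?thesis
  proof
    show "R \<subseteq> {\<one>}"
    proof
      fix r assume r: "r \<in> R"
      obtain y where y: "y \<in> R" "y [^] (card Cs * n) = r"
        using rad r Cne n(1) unfolding radicable_def by (metis nat_0_less_mult_iff)
      have yc: "y \<in> carrier G" using y RG by auto
      have "r = (y [^] card Cs) [^] n" using y yc by (simp add: nat_pow_pow)
      also have "\<dots> = V y [^] n" using Vpw y by simp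
      also have "\<dots> = \<one>" using VK y RK by auto
      finally show "r \<in> {\<one>}" by simp
    qed
    show "{\<one>} \<subseteq> R" using subgroup.one_closed[OF Rsub] by simp
  qed
qed

end
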